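(* Let $n\ge1$, $n<p<+\infty$ and $\gamma<p-1$. There exists $C=C(n,\gamma,p)>0$ such that for every $u\in C^\infty_c(\mathbb{R}^n_+)$ and every $x\in\mathbb{R}^n_+$, \[ |u(x)|\le C\,x_n^{1-\frac{n+\gamma}{p}}\Big(\int_{\mathbb{R}^n_+}|Du(z)|^pz_n^\gamma\,dz\Big)^{1/p}. \]
   Context: $\mathbb{R}^n_+=\mathbb{R}^{n-1}\times(0,+\infty)$, points $x=(x',x_n)$; $C^\infty_c(\mathbb{R}^n_+)$ denotes smooth functions with compact support contained in the open half-space. *)

theory Defs
  imports "HOL-Analysis.Analysis"
begin

text \<open>Points of R^n are vectors of type real^'n (n = CARD('n) \<ge> 1).
  A fixed coordinate index k plays the role of the last coordinate x_n.\<close>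

definition half_space :: "'n::finite \<Rightarrow> (real^'n) set" where
  "half_space k = {x. x $ k > 0}"

definition partial_deriv :: "'n::finite \<Rightarrow> (real^'n \<Rightarrow> real) \<Rightarrow> real^'n \<Rightarrow> real" where
  "partial_deriv i f x = frechet_derivative f (at x) (axis i 1)"

definition grad :: "(real^'n::finite \<Rightarrow> real) \<Rightarrow> real^'n \<Rightarrow> real^'n" where
  "grad f x = (\<chi> i. partial_deriv i f x)"

fun Ck :: "nat \<Rightarrow> (real^'n::finite \<Rightarrow> real) \<Rightarrow> bool" where
  "Ck 0 f = continuous_on UNIV f"
| "Ck (Suc k) f = (continuous_on UNIV f \<and> (\<forall>x. f differentiable (at x))
                   \<and> (\<forall>i. Ck k (partial_deriv i f)))"

definition smooth :: "(real^'n::finite \<Rightarrow> real) \<Rightarrow> bool" where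
  "smooth f = (\<forall>k. Ck k f)"

definition tsupport :: "(real^'n::finite \<Rightarrow> real) \<Rightarrow> (real^'n) set" where
  "tsupport f = closure {x. f x \<noteq> 0}"

definition Cc_inf :: "(real^'n::finite) set \<Rightarrow> (real^'n \<Rightarrow> real) set" where
  "Cc_inf S = {f. smooth f \<and> compact (tsupport f) \<and> tsupport f \<subseteq> S}"

end

theory Submission
  imports Defs
begin

lemma Cc_facts:
  assumes "u \<in> Cc_inf (half_space k)"
  shows "continuous_on UNIV u" "\<And>z. u differentiable (at z)"
    "\<And>i. continuous_on UNIV (partial_deriv i u)"
    "compact (tsupport u)" "tsupport u \<subseteq> half_space k"
proof -
  have sm: "smooth u" using assms by (simp add: Cc_inf_def)
  have c2: "Ck (Suc (Suc 0)) u" using sm by (simp add: smooth_def)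
  then show "continuous_on UNIV u" "\<And>z. u differentiable (at z)"
    "\<And>i. continuous_on UNIV (partial_deriv i u)" by auto
  show "compact (tsupport u)" "tsupport u \<subseteq> half_space k" using assms by (auto simp: Cc_inf_def)
qed

lemma grad_deriv:
  fixes u :: "real^'n::finite \<Rightarrow> real"
  assumes "u differentiable (at z)"
  shows "(u has_derivative (\<lambda>h. grad u z \<bullet> h)) (at z)"
proof -
  let ?f = "frechet_derivative u (at z)"
  have d: "(u has_derivative ?f) (at z)" using assms frechet_derivative_works by blast
  have lin: "linear ?f" using d has_derivative_linear by blast
  have "?f h = grad u z \<bullet> h" for h
  proof -
    have "?f h = ?f (\<Sum>i\<in>UNIV. h$i *\<^sub>R axis i 1)"
      by (metis (no_types) basis_expansion vector_scaleR_component scalar_mult_eq_scaleR)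
    also have "\<dots> = (\<Sum>i\<in>UNIV. h$i * ?f (axis i 1))"
      using lin by (simp add: linear_sum linear_scale)
    also have "\<dots> = grad u z \<bullet> h"
      by (simp add: grad_def partial_deriv_def inner_vec_def mult.commute)
    finally show ?thesis .
  qed
  then have "?f = (\<lambda>h. grad u z \<bullet> h)" by auto
  with d show ?thesis by simp
qed

lemma grad_zero:
  fixes u :: "real^'n::finite \<Rightarrow> real"
  assumes "z \<notin> tsupport u"
  shows "grad u z = 0"
proof -
  have o: "open (- tsupport u)" by (simp add: tsupport_def open_Compl)
  have z: "\<And>w. w \<in> - tsupport u \<Longrightarrow> u w = 0" using closure_subset[of "{x. u x \<noteq> 0}"]
    by (auto simp: tsupport_def)
  have "(u has_derivative (\<lambda>h. 0)) (at z)"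
    by (rule has_derivative_transform_within_open[of "\<lambda>w. 0" "\<lambda>h. 0" z UNIV "- tsupport u"])
       (use o z assms in auto)
  then have "frechet_derivative u (at z) = (\<lambda>h. 0)" using frechet_derivative_at by metis
  then show ?thesis by (simp add: grad_def partial_deriv_def vec_eq_iff)
qed

lemma u_zero:
  assumes "u \<in> Cc_inf (half_space k)" "\<not> z $ k > 0"
  shows "u z = 0"
proof -
  have "tsupport u \<subseteq> half_space k" using assms by (simp add: Cc_inf_def)
  then show ?thesis using assms(2) closure_subset[of "{x. u x \<noteq> 0}"]
    by (auto simp: tsupport_def half_space_def)
qed

lemma grad_cont:
  assumes "u \<in> Cc_inf (half_space k)"
  shows "continuous_on UNIV (grad u)"
proof -
  have "\<And>i. continuous_on UNIV (partial_deriv i u)" using Cc_facts[OF assms] by auto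
  then show ?thesis unfolding grad_def by (intro continuous_on_vec_lambda) auto
qed


lemma ftc_bound:
  fixes u :: "real^'n::finite \<Rightarrow> real"
  assumes "u \<in> Cc_inf (half_space k)"
  shows "ennreal \<bar>u y - u x\<bar> \<le>
    (\<integral>\<^sup>+l. indicator {0<..<1} l * (norm (grad u (x + l *\<^sub>R (y - x))) * norm (y - x)) \<partial>lborel)"
proof -
  define P where "P = (\<lambda>l::real. x + l *\<^sub>R (y - x))"
  define g where "g = (\<lambda>l. grad u (P l) \<bullet> (y - x))"
  define h where "h = (\<lambda>l. norm (grad u (P l)) * norm (y - x))"
  have contP: "continuous_on UNIV P" unfolding P_def by (intro continuous_intros)
  have gc: "continuous_on UNIV (grad u)" using grad_cont[OF assms] .
  have hc: "continuous_on UNIV h" unfolding h_def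
    by (intro continuous_intros continuous_on_compose2[OF gc contP]) auto
  have der: "((\<lambda>l. u (P l)) has_vector_derivative g l) (at l within {0..1})" for l
  proof -
    have dP: "(P has_derivative (\<lambda>h. h *\<^sub>R (y - x))) (at l)" unfolding P_def
      by (auto intro!: derivative_eq_intros)
    have du: "(u has_derivative (\<lambda>h. grad u (P l) \<bullet> h)) (at (P l))"
      using grad_deriv Cc_facts(2)[OF assms] by blast
    have "((\<lambda>l. u (P l)) has_derivative (\<lambda>h. grad u (P l) \<bullet> (h *\<^sub>R (y - x)))) (at l)"
      using has_derivative_compose[OF dP du] by (simp add: o_def)
    then have "((\<lambda>l. u (P l)) has_derivative (\<lambda>h. h *\<^sub>R g l)) (at l)"
      by (simp add: g_def inner_scaleR_right)
    then show ?thesis unfolding has_vector_derivative_def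
      using has_derivative_at_withinI by blast
  qed
  have "(g has_integral (u (P 1) - u (P 0))) {0..1}"
    by (rule fundamental_theorem_of_calculus) (use der in auto)
  then have gi: "(g has_integral (u y - u x)) {0..1}" by (simp add: P_def)
  have hi: "h integrable_on {0..1}"
    using hc by (intro integrable_continuous_interval) (auto intro: continuous_on_subset)
  have "\<bar>u y - u x\<bar> = norm (integral {0..1} g)" using gi by (simp add: integral_unique)
  also have "\<dots> \<le> integral {0..1} h"
    by (rule integral_norm_bound_integral) (use gi hi in \<open>auto simp: g_def h_def intro: Cauchy_Schwarz_ineq2\<close>)
  finally have le: "\<bar>u y - u x\<bar> \<le> integral {0..1} h" .
  have "(h has_integral integral {0..1} h) (box 0 1)"
    using hi has_integral_open_interval[of h _ 0 1] by (simp add: has_integral_integral)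
  then have "(h has_integral integral {0..1} h) {0<..<1}" by (simp add: box_real)
  then have "(\<integral>\<^sup>+l. indicator {0<..<1} l * h l \<partial>lborel) = ennreal (integral {0..1} h)"
    by (intro nn_integral_has_integral_lebesgue) (auto simp: h_def)
  with le show ?thesis by (simp add: h_def P_def)
qed


lemma powr_int_01:
  assumes "d > -1"
  shows "(\<integral>\<^sup>+l. indicator {0<..<1::real} l * l powr d \<partial>lborel) = ennreal (1 / (d + 1))"
proof -
  have "((\<lambda>l. l powr d) has_integral (1 powr (d+1) / (d+1))) {0..1}"
    using has_integral_powr_from_0[of d 1] assms by simp
  then have "((\<lambda>l::real. l powr d) has_integral (1 / (d+1))) {0<..<1}"
    using has_integral_open_interval[of "\<lambda>l::real. l powr d" _ 0 1] by (simp add: box_real)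
  then show ?thesis by (intro nn_integral_has_integral_lebesgue) auto
qed

lemma powr_int_01':
  assumes "d > -1"
  shows "(\<integral>\<^sup>+l. indicator {0<..<1::real} l * (1 - l) powr d \<partial>lborel) = ennreal (1 / (d + 1))"
proof -
  have "(\<integral>\<^sup>+l. indicator {0<..<1::real} l * l powr d \<partial>lborel)
     = ennreal \<bar>-1\<bar> * (\<integral>\<^sup>+l. indicator {0<..<1::real} (1 + (-1) * l) * (1 + (-1) * l) powr d \<partial>lborel)"
    by (rule nn_integral_real_affine) auto
  also have "(\<lambda>l. indicator {0<..<1::real} (1 + (-1) * l) * (1 + (-1) * l) powr d)
      = (\<lambda>l. indicator {0<..<1::real} l * (1 - l) powr d)"
    by (auto simp: indicator_def fun_eq_iff)
  finally show ?thesis using powr_int_01[OF assms] by simp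
qed


lemma beta_pointwise:
  fixes b c m :: real
  assumes "0 < m" "m < 1" "0 < c"
  shows "(1 - m) powr (-b) * m powr (-c) \<le> 2 powr (\<bar>b\<bar> + c) * (m powr (-c) + (1 - m) powr (-b))"
proof (cases "m \<le> 1/2")
  case True
  have "(1 - m) powr (-b) \<le> 2 powr \<bar>b\<bar>"
  proof (cases "b \<ge> 0")
    case True
    have "(1 - m) powr (-b) \<le> (1/2) powr (-b)"
      using \<open>m \<le> 1/2\<close> assms True by (intro powr_mono2') auto
    also have "\<dots> = 2 powr b" by (simp add: powr_minus_divide powr_divide)
    finally show ?thesis using True by simp
  next
    case False
    have "(1 - m) powr (-b) \<le> 1 powr (-b)" using assms False by (intro powr_mono2) auto
    then have "(1 - m) powr (-b) \<le> 1" by simp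
    also have "1 \<le> 2 powr \<bar>b\<bar>" by (rule ge_one_powr_ge_zero) auto
    finally show ?thesis .
  qed
  moreover have "2 powr \<bar>b\<bar> \<le> 2 powr (\<bar>b\<bar> + c)" using assms by simp
  ultimately have "(1 - m) powr (-b) \<le> 2 powr (\<bar>b\<bar> + c)" by linarith
  then have "(1 - m) powr (-b) * m powr (-c) \<le> 2 powr (\<bar>b\<bar> + c) * m powr (-c)"
    by (intro mult_right_mono) auto
  also have "\<dots> \<le> 2 powr (\<bar>b\<bar> + c) * (m powr (-c) + (1 - m) powr (-b))"
    by (intro mult_left_mono) auto
  finally show ?thesis .
next
  case False
  have "m powr (-c) \<le> (1/2) powr (-c)"
    using False assms by (intro powr_mono2') auto
  also have "\<dots> = 2 powr c" by (simp add: powr_minus_divide powr_divide)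
  also have "\<dots> \<le> 2 powr (\<bar>b\<bar> + c)" by simp
  finally have "(1 - m) powr (-b) * m powr (-c) \<le> (1 - m) powr (-b) * 2 powr (\<bar>b\<bar> + c)"
    by (intro mult_left_mono) auto
  also have "\<dots> \<le> 2 powr (\<bar>b\<bar> + c) * (m powr (-c) + (1 - m) powr (-b))"
    by (simp add: algebra_simps)
  finally show ?thesis .
qed

definition "Bconst b c = 2 powr (\<bar>b\<bar> + c) * (1 / (1 - c) + 1 / (1 - b))"

lemma beta_bound:
  fixes b c :: real
  assumes "b < 1" "0 < c" "c < 1"
  shows "(\<integral>\<^sup>+m. indicator {0<..<1} m * ((1 - m) powr (-b) * m powr (-c)) \<partial>lborel) \<le> ennreal (Bconst b c)"
proof -
  let ?K = "2 powr (\<bar>b\<bar> + c)"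
  have "(\<integral>\<^sup>+m. indicator {0<..<1} m * ((1 - m) powr (-b) * m powr (-c)) \<partial>lborel)
     \<le> (\<integral>\<^sup>+m. ennreal ?K * (indicator {0<..<1} m * m powr (-c)) + ennreal ?K * (indicator {0<..<1} m * (1 - m) powr (-b)) \<partial>lborel)"
  proof (intro nn_integral_mono)
    fix m :: real
    show "ennreal (indicator {0<..<1} m * ((1 - m) powr (-b) * m powr (-c)))
      \<le> ennreal ?K * (indicator {0<..<1} m * m powr (-c)) + ennreal ?K * (indicator {0<..<1} m * (1 - m) powr (-b))"
    proof (cases "m \<in> {0<..<1}")
      case True
      then show ?thesis using beta_pointwise[of m c b] assms
        by (simp add: ennreal_mult''[symmetric] ennreal_plus[symmetric] distrib_left del: ennreal_plus)
    qed simp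
  qed
  also have "\<dots> = ennreal ?K * (\<integral>\<^sup>+m. indicator {0<..<1} m * m powr (-c) \<partial>lborel)
      + ennreal ?K * (\<integral>\<^sup>+m. indicator {0<..<1} m * (1 - m) powr (-b) \<partial>lborel)"
    by (simp add: nn_integral_add nn_integral_cmult)
  also have "\<dots> = ennreal (Bconst b c)"
    using powr_int_01[of "-c"] powr_int_01'[of "-b"] assms
    by (simp add: Bconst_def ennreal_mult''[symmetric] ennreal_plus[symmetric] distrib_left del: ennreal_plus)
  finally show ?thesis .
qed


lemma weight_int:
  fixes b c t s :: real
  assumes "b < 1" "0 < c" "c < 1" "0 < t" "t \<le> s"
  shows "(\<integral>\<^sup>+l. indicator {0<..<1} l * ((if 0 < t - l * s then (t - l * s) powr (-b) else 0) * l powr (-c)) \<partial>lborel)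
      \<le> ennreal (t powr (-b) * Bconst b c)"
proof -
  define f where "f = (\<lambda>l::real. ennreal (indicator {0<..<1} l * ((if 0 < t - l * s then (t - l * s) powr (-b) else 0) * l powr (-c))))"
  have s0: "s > 0" using assms by linarith
  have fm: "f \<in> borel_measurable borel" unfolding f_def by measurable
  have "(\<integral>\<^sup>+l. f l \<partial>lborel) = ennreal \<bar>t/s\<bar> * (\<integral>\<^sup>+m. f (0 + (t/s) * m) \<partial>lborel)"
    by (rule nn_integral_real_affine[OF fm]) (use assms s0 in auto)
  also have "(\<lambda>m. f (0 + (t/s) * m)) = (\<lambda>m. ennreal (t powr (-b) * (t/s) powr (-c)) *
        ennreal (indicator {0<..<1} m * ((1 - m) powr (-b) * m powr (-c))))"
  proof
    fix m :: real
    show "f (0 + (t/s) * m) = ennreal (t powr (-b) * (t/s) powr (-c)) *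
        ennreal (indicator {0<..<1} m * ((1 - m) powr (-b) * m powr (-c)))"
    proof (cases "m \<in> {0<..<1}")
      case True
      have "t / s \<le> 1" using assms s0 by simp
      then have "t / s * m \<le> 1 * m" using True by (intro mult_right_mono) auto
      then have "t / s * m < 1" using True by simp
      moreover have "(t/s*m) powr (-c) = (t/s) powr (-c) * m powr (-c)"
        using True assms s0 powr_mult[of "t/s" m "-c"] by simp
      moreover have e: "t - t / s * m * s = t * (1 - m)" using s0 by (simp add: field_simps)
      ultimately show ?thesis using True assms s0
        by (simp add: f_def e powr_mult ennreal_mult''[symmetric] mult_pos_pos mult_ac)
    next
      case False
      then consider "m \<le> 0" | "m \<ge> 1" by force
      then show ?thesis
      proof cases
        case 1
        then have "t/s*m \<le> 0" using assms s0 by (intro mult_nonneg_nonpos) auto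
        then show ?thesis using False by (simp add: f_def)
      next
        case 2
        have e: "t - t / s * m * s = t * (1 - m)" using s0 by (simp add: field_simps)
        have "t * (1 - m) \<le> 0" using 2 assms by (intro mult_nonneg_nonpos) auto
        then have "\<not> 0 < t * (1 - m)" by linarith
        have "t * 1 \<le> t * m" using 2 assms by (intro mult_left_mono) auto
        then show ?thesis using False by (simp add: f_def e)
      qed
    qed
  qed
  also have "ennreal \<bar>t/s\<bar> * (\<integral>\<^sup>+m. ennreal (t powr (-b) * (t/s) powr (-c)) *
        ennreal (indicator {0<..<1} m * ((1 - m) powr (-b) * m powr (-c))) \<partial>lborel)
     = ennreal (t/s) * ennreal (t powr (-b) * (t/s) powr (-c)) *
       (\<integral>\<^sup>+m. indicator {0<..<1} m * ((1 - m) powr (-b) * m powr (-c)) \<partial>lborel)"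
    using assms s0 by (simp add: nn_integral_cmult mult.assoc)
  also have "\<dots> \<le> ennreal (t/s) * ennreal (t powr (-b) * (t/s) powr (-c)) * ennreal (Bconst b c)"
    by (intro mult_left_mono beta_bound assms) auto
  also have "\<dots> = ennreal ((t/s) powr (1 - c) * t powr (-b) * Bconst b c)"
  proof -
    have "(t/s) * (t/s) powr (-c) = (t/s) powr (1 - c)" using assms s0
      by (simp add: powr_diff powr_minus field_simps)
    moreover have "Bconst b c \<ge> 0" using assms unfolding Bconst_def by auto
    ultimately have r: "(t/s) * (t powr (-b) * (t/s) powr (-c)) * Bconst b c = (t/s) powr (1 - c) * t powr (-b) * Bconst b c"
      by (metis mult.assoc mult.commute)
    have "ennreal (t/s) * ennreal (t powr (-b) * (t/s) powr (-c)) * ennreal (Bconst b c)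
       = ennreal ((t/s) * (t powr (-b) * (t/s) powr (-c)) * Bconst b c)"
    proof -
      have a1: "0 \<le> t/s" "0 \<le> t powr (-b) * (t/s) powr (-c)" using assms s0 by auto
      then have a2: "0 \<le> (t/s) * (t powr (-b) * (t/s) powr (-c))" by (rule mult_nonneg_nonneg)
      show ?thesis using ennreal_mult[OF a1] ennreal_mult[OF a2 \<open>Bconst b c \<ge> 0\<close>] by simp
    qed
    then show ?thesis using r by simp
  qed
  also have "\<dots> \<le> ennreal (t powr (-b) * Bconst b c)"
  proof (intro ennreal_leI)
    have "(t/s) powr (1 - c) \<le> 1 powr (1 - c)" using assms s0 by (intro powr_mono2) auto
    then have "(t/s) powr (1 - c) \<le> 1" by simp
    moreover have "Bconst b c \<ge> 0" using assms unfolding Bconst_def by auto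
    ultimately show "(t/s) powr (1 - c) * t powr (-b) * Bconst b c \<le> t powr (-b) * Bconst b c"
      by (simp add: mult_left_le_one_le mult.assoc)
  qed
  finally show ?thesis unfolding f_def .
qed


lemma young_opt:
  fixes p q A B X :: real
  assumes pq: "p > 1" "q > 1" "1/p + 1/q = 1" and A: "A \<ge> 0" and B: "B > 0"
    and H: "\<And>e. e > 0 \<Longrightarrow> X \<le> e powr p * A / p + e powr (-q) * B / q"
  shows "X \<le> A powr (1/p) * B powr (1/q)"
proof (cases "A = 0")
  case True
  show ?thesis
  proof (rule ccontr)
    assume "\<not> ?thesis"
    then have X: "X > 0" using True by simp
    define e where "e = (2 * B / (q * X)) powr (1/q)"
    have e0: "e > 0" using X B pq unfolding e_def by auto
    have "e powr (-q) = (2 * B / (q * X)) powr (-1)"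
      unfolding e_def using X B pq by (simp add: powr_powr)
    also have "\<dots> = q * X / (2 * B)" using X B pq by (simp add: powr_minus_divide)
    finally have "e powr (-q) * B / q = X / 2" using B pq by (simp add: field_simps)
    with H[OF e0] True X show False by simp
  qed
next
  case False
  then have A0: "A > 0" using A by simp
  define R where "R = B / A"
  have R0: "R > 0" using A0 B by (simp add: R_def)
  define e where "e = R powr (1/(p*q))"
  have e0: "e > 0" using R0 by (simp add: e_def)
  have ep: "e powr p = R powr (1/q)" unfolding e_def using pq by (simp add: powr_powr)
  have eq: "e powr (-q) = R powr (-(1/p))" unfolding e_def using pq by (simp add: powr_powr)
  have p1: "1 - 1/q = 1/p" "1 - 1/p = 1/q" using pq by linarith+
  have "R powr (1/q) * A = A powr (1/p) * B powr (1/q)"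
  proof -
    have "R powr (1/q) * A = B powr (1/q) / A powr (1/q) * A powr 1"
      using A0 B by (simp add: R_def powr_divide)
    also have "\<dots> = B powr (1/q) * A powr (1 - 1/q)"
      using A0 by (simp add: powr_diff)
    finally show ?thesis using p1 by simp
  qed
  moreover have "R powr (-(1/p)) * B = A powr (1/p) * B powr (1/q)"
  proof -
    have "R powr (-(1/p)) = A powr (1/p) / B powr (1/p)"
      using A0 B by (simp add: R_def powr_divide powr_minus_divide)
    moreover have "B / B powr (1/p) = B powr (1 - 1/p)"
      using B by (simp add: powr_diff)
    ultimately show ?thesis using p1 by (metis times_divide_eq_right mult.commute)
  qed
  ultimately have "e powr p * A / p + e powr (-q) * B / q = A powr (1/p) * B powr (1/q) * (1/p + 1/q)"
    using ep eq by (simp add: field_simps)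
  with H[OF e0] pq show ?thesis by simp
qed


lemma meas_test:
  fixes G :: "real^'n::finite \<Rightarrow> real"
  assumes [measurable]: "G \<in> borel_measurable borel"
  shows "(\<lambda>(y,l). ennreal (indicator {0<..<1} l * (G (x + l *\<^sub>R (y - x)) * l powr r)))
     \<in> borel_measurable (lborel \<Otimes>\<^sub>M lborel)"
  by measurable

lemma vec_nth_meas[measurable]: "(\<lambda>z::real^'n::finite. z$k) \<in> borel_measurable borel"
  by (intro borel_measurable_continuous_onI continuous_intros)

lemma meas_test2:
  fixes u :: "real^'n::finite \<Rightarrow> real"
  assumes [measurable]: "(\<lambda>z. norm (grad u z)) \<in> borel_measurable borel"
  shows "(\<lambda>z::real^'n. if 0 < z$k then (z$k) powr g else 0) \<in> borel_measurable borel"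
  by measurable


lemma young_pw:
  fixes e Fv zk l p q g a :: real
  assumes pq: "p > 1" "q > 1" "1/p + 1/q = 1" and e: "e > 0" and F: "Fv \<ge> 0" and z: "zk > 0" and l: "l > 0"
  shows "Fv \<le> e powr p / p * (Fv powr p * zk powr g * l powr (a*p))
             + e powr (-q) / q * (zk powr (-(g*q/p)) * l powr (-(a*q)))"
proof -
  define \<alpha> where "\<alpha> = e * Fv * zk powr (g/p) * l powr a"
  define \<beta> where "\<beta> = inverse e * zk powr (-(g/p)) * l powr (-a)"
  have a0: "\<alpha> \<ge> 0" unfolding \<alpha>_def using e F by auto
  have b0: "\<beta> \<ge> 0" unfolding \<beta>_def using e by auto
  have "\<alpha> * \<beta> = Fv * (e * inverse e) * (zk powr (g/p) * zk powr (-(g/p))) * (l powr a * l powr (-a))"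
    unfolding \<alpha>_def \<beta>_def by (simp add: mult_ac)
  also have "\<dots> = Fv" using e z l by (simp add: powr_add[symmetric])
  finally have ab: "\<alpha> * \<beta> = Fv" .
  have ap: "\<alpha> powr p = e powr p * Fv powr p * zk powr g * l powr (a*p)"
    unfolding \<alpha>_def using e F z l pq by (simp add: powr_mult powr_powr)
  have bq: "\<beta> powr q = e powr (-q) * (zk powr (-(g*q/p)) * l powr (-(a*q)))"
    unfolding \<beta>_def using e F z l pq by (simp add: powr_mult powr_powr powr_minus inverse_powr)
  have "Fv \<le> \<alpha> powr p / p + \<beta> powr q / q"
    using Youngs_inequality[OF pq a0 b0] ab by simp
  also have "\<dots> = e powr p / p * (Fv powr p * zk powr g * l powr (a*p))
             + e powr (-q) / q * (zk powr (-(g*q/p)) * l powr (-(a*q)))"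
    using ap bq by (simp add: mult_ac)
  finally show ?thesis .
qed


lemma scale_int:
  fixes G :: "real^'n::finite \<Rightarrow> real" and l :: real
  assumes [measurable]: "G \<in> borel_measurable borel" and l: "l > 0"
  shows "(\<integral>\<^sup>+y. ennreal (G (x + l *\<^sub>R (y - x))) \<partial>lborel) = ennreal (l powr (- real CARD('n))) * (\<integral>\<^sup>+z. ennreal (G z) \<partial>lborel)"
proof -
  have "(\<integral>\<^sup>+z. ennreal (G z) \<partial>lborel) =
     (\<integral>\<^sup>+z. ennreal (G z) \<partial>(density (distr lborel borel (\<lambda>y. (x - l *\<^sub>R x) + l *\<^sub>R y)) (\<lambda>_. \<bar>l\<bar>^DIM(real^'n))))"
    using lborel_affine[of l "x - l *\<^sub>R x"] l by simp
  also have "\<dots> = (\<integral>\<^sup>+y. ennreal (l ^ CARD('n)) * ennreal (G (x + l *\<^sub>R (y - x))) \<partial>lborel)"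
    using l by (simp add: nn_integral_density nn_integral_distr algebra_simps)
  also have "\<dots> = ennreal (l ^ CARD('n)) * (\<integral>\<^sup>+y. ennreal (G (x + l *\<^sub>R (y - x))) \<partial>lborel)"
    by (simp add: nn_integral_cmult)
  finally have e: "(\<integral>\<^sup>+z. ennreal (G z) \<partial>lborel) = ennreal (l ^ CARD('n)) * (\<integral>\<^sup>+y. ennreal (G (x + l *\<^sub>R (y - x))) \<partial>lborel)" .
  have "ennreal (l powr (- real CARD('n))) * ennreal (l ^ CARD('n)) = 1"
    using l by (simp add: ennreal_mult[symmetric] powr_minus powr_realpow)
  then show ?thesis unfolding e by (simp add: mult.assoc[symmetric])
qed


lemma integr_fact:
  fixes u :: "real^'n::finite \<Rightarrow> real"
  assumes u: "u \<in> Cc_inf (half_space k)" and p: "p > 0"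
  shows "integrable lborel (\<lambda>z. indicator (half_space k) z *\<^sub>R (norm (grad u z) powr p * (z$k) powr g))"
proof -
  let ?K = "tsupport u"
  let ?h = "\<lambda>z. norm (grad u z) powr p * (z$k) powr g"
  have K: "compact ?K" "?K \<subseteq> half_space k" using Cc_facts[OF u] by auto
  have gc: "continuous_on UNIV (grad u)" using grad_cont[OF u] .
  have hc: "continuous_on ?K ?h"
  proof (intro continuous_on_mult continuous_on_powr')
    show "continuous_on ?K (\<lambda>z. norm (grad u z))"
      using gc by (intro continuous_on_norm) (auto intro: continuous_on_subset)
    show "\<forall>z\<in>?K. 0 \<le> (z$k) \<and> ((z$k) = 0 \<longrightarrow> 0 < g)"
      using K(2) by (auto simp: half_space_def)
  qed (use p in \<open>auto intro!: continuous_intros\<close>)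
  have "integrable lborel (\<lambda>z. indicator ?K z *\<^sub>R ?h z)"
    by (rule borel_integrable_compact[OF K(1) hc])
  moreover have "(\<lambda>z. indicator ?K z *\<^sub>R ?h z) = (\<lambda>z. indicator (half_space k) z *\<^sub>R ?h z)"
  proof
    fix z
    show "indicator ?K z *\<^sub>R ?h z = indicator (half_space k) z *\<^sub>R ?h z"
    proof (cases "z \<in> ?K")
      case True then show ?thesis using K(2) by auto
    next
      case False
      then have "grad u z = 0" by (rule grad_zero)
      then show ?thesis using False p by (simp add: indicator_def)
    qed
  qed
  ultimately show ?thesis by metis
qed


lemma enn_aux1:
  fixes a X Y :: real
  assumes "0 \<le> a" "X \<le> a * Y"
  shows "ennreal X \<le> ennreal a * ennreal Y"
proof -
  have "ennreal X \<le> ennreal (a * Y)" using assms(2) by (rule ennreal_leI)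
  also have "\<dots> = ennreal a * ennreal Y" using assms(1) by (rule ennreal_mult')
  finally show ?thesis .
qed

lemma enn_aux2:
  fixes a b c d X :: real
  assumes "0 \<le> a" "0 \<le> b" "0 \<le> c" "0 \<le> d" "X \<le> a * b + c * d"
  shows "ennreal X \<le> ennreal a * ennreal b + ennreal c * ennreal d"
proof -
  have "ennreal X \<le> ennreal (a * b + c * d)" using assms(5) by (rule ennreal_leI)
  also have "\<dots> = ennreal (a * b) + ennreal (c * d)" using assms by (intro ennreal_plus) auto
  also have "\<dots> = ennreal a * ennreal b + ennreal c * ennreal d" using assms by (simp add: ennreal_mult')
  finally show ?thesis .
qed

lemma main_bound:
  fixes u :: "real^'n::finite \<Rightarrow> real" and x :: "real^'n" and p q a b c g :: real
  assumes pq: "p > 1" "q > 1" "1/p + 1/q = 1"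
    and c: "0 < c" "c < 1" "c = a * q" and b: "b < 1" "b = g * q / p"
    and ap: "a * p - real CARD('n) > -1"
    and u: "u \<in> Cc_inf (half_space k)" and x: "x \<in> half_space k"
  defines "t \<equiv> x $ k"
  defines "I \<equiv> (LINT z:half_space k|lborel. norm (grad u z) powr p * (z $ k) powr g)"
  defines "V \<equiv> unit_ball_vol (real CARD('n)) * (t/2) ^ CARD('n)"
  shows "\<bar>u x\<bar> \<le> (2 * t * I / (V * (a * p - real CARD('n) + 1))) powr (1/p)
                 * (2 * t * t powr (-b) * Bconst b c) powr (1/q)"
proof -
  define n where "n = real CARD('n)"
  define H where "H = half_space k"
  define F where "F = (\<lambda>z. norm (grad u z))"
  define G where "G = (\<lambda>z. indicator H z * (norm (grad u z) powr p * (z $ k) powr g))"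
  define W where "W = (\<lambda>z::real^'n. if 0 < z$k then (z$k) powr (-b) else 0)"
  define P where "P = (\<lambda>y l. x + l *\<^sub>R (y - x))"
  define T1 where "T1 = (\<lambda>y. \<integral>\<^sup>+l. ennreal (indicator {0<..<1} l * (G (P y l) * l powr (a*p))) \<partial>lborel)"
  define T2 where "T2 = (\<lambda>y. \<integral>\<^sup>+l. ennreal (indicator {0<..<1} l * (W (P y l) * l powr (-c))) \<partial>lborel)"
  define E where "E = ball (x - (3*t/2) *\<^sub>R axis k 1) (t/2)"
  define Bc where "Bc = Bconst b c"
  have t0: "t > 0" using x by (simp add: t_def half_space_def)
  have p0: "p > 0" using pq by simp
  have Bc0: "Bc > 0" using c(1,2) b(1) unfolding Bc_def Bconst_def by (intro mult_pos_pos add_pos_pos) auto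
  have V0: "V > 0" using t0 by (simp add: V_def)
  have EV: "emeasure lborel E = ennreal V"
    using t0 by (simp add: E_def V_def emeasure_ball)
  have int: "integrable lborel G"
    using integr_fact[OF u p0, of g] by (simp add: G_def H_def)
  have Gm[measurable]: "G \<in> borel_measurable borel"
    using borel_measurable_integrable[OF int] by simp
  have G0: "G z \<ge> 0" for z by (simp add: G_def)
  have I0: "(\<integral>\<^sup>+z. ennreal (G z) \<partial>lborel) = ennreal I"
  proof -
    have "(\<integral>\<^sup>+z. ennreal (G z) \<partial>lborel) = ennreal (integral\<^sup>L lborel G)"
      using int G0 by (intro nn_integral_eq_integral) auto
    also have "integral\<^sup>L lborel G = I"
      by (simp add: I_def G_def H_def set_lebesgue_integral_def)
    finally show ?thesis .
  qed
  have Inn: "I \<ge> 0"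
    unfolding I_def set_lebesgue_integral_def by (intro integral_nonneg_AE) auto
  have Wm[measurable]: "W \<in> borel_measurable borel" unfolding W_def by measurable
  have W0: "W z \<ge> 0" for z by (simp add: W_def)
  have Fm[measurable]: "F \<in> borel_measurable borel" unfolding F_def
    using grad_cont[OF u] by (intro borel_measurable_continuous_onI continuous_intros) auto
  have Ey: "y $ k \<le> 0 \<and> t \<le> t - y $ k \<and> norm (y - x) \<le> 2 * t" if "y \<in> E" for y
  proof -
    let ?c0 = "x - (3*t/2) *\<^sub>R axis k 1"
    have d: "norm (y - ?c0) < t/2" using that by (simp add: E_def dist_norm norm_minus_commute)
    have "\<bar>(y - ?c0) $ k\<bar> \<le> norm (y - ?c0)" by (rule component_le_norm_cart)
    moreover have "(y - ?c0) $ k = y $ k - t + 3*t/2" by (simp add: t_def axis_def)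
    ultimately have "\<bar>y $ k - t + 3*t/2\<bar> < t/2" using d by linarith
    then have yk: "y $ k < 0" by linarith
    have "norm (y - x) \<le> norm (y - ?c0) + norm (?c0 - x)"
      using norm_triangle_ineq[of "y - ?c0" "?c0 - x"] by simp
    also have "norm (?c0 - x) = 3*t/2" using t0 by simp
    finally show ?thesis using d yk by linarith
  qed
  have T2b: "T2 y \<le> ennreal (t powr (-b) * Bc)" if "y \<in> E" for y
  proof -
    have Pk: "P y l $ k = t - l * (t - y $ k)" for l by (simp add: P_def t_def algebra_simps)
    have "T2 y = (\<integral>\<^sup>+l. indicator {0<..<1} l * ((if 0 < t - l * (t - y$k) then (t - l * (t - y$k)) powr (-b) else 0) * l powr (-c)) \<partial>lborel)"
      by (simp only: T2_def W_def Pk)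
    also have "\<dots> \<le> ennreal (t powr (-b) * Bc)"
      unfolding Bc_def using Ey[OF that] t0 b c by (intro weight_int) auto
    finally show ?thesis .
  qed
  have T1b: "(\<integral>\<^sup>+y. T1 y \<partial>lborel) = ennreal I * ennreal (1 / (a*p - n + 1))"
  proof -
    have ps: "pair_sigma_finite (lborel :: (real^'n) measure) (lborel :: real measure)"
      by (intro pair_sigma_finite.intro sigma_finite_lborel)
    have "(\<integral>\<^sup>+y. T1 y \<partial>lborel) = (\<integral>\<^sup>+l. (\<integral>\<^sup>+y. ennreal (indicator {0<..<1} l * (G (P y l) * l powr (a*p))) \<partial>lborel) \<partial>lborel)"
      unfolding T1_def P_def by (rule pair_sigma_finite.Fubini'[OF ps, symmetric]) measurable
    also have "\<dots> = (\<integral>\<^sup>+l. ennreal (indicator {0<..<1} l * l powr (a*p - n)) * ennreal I \<partial>lborel)"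
    proof (intro nn_integral_cong)
      fix l :: real
      show "(\<integral>\<^sup>+y. ennreal (indicator {0<..<1} l * (G (P y l) * l powr (a*p))) \<partial>lborel)
         = ennreal (indicator {0<..<1} l * l powr (a*p - n)) * ennreal I"
      proof (cases "l \<in> {0<..<1}")
        case True
        have "(\<integral>\<^sup>+y. ennreal (indicator {0<..<1} l * (G (P y l) * l powr (a*p))) \<partial>lborel)
           = (\<integral>\<^sup>+y. ennreal (l powr (a*p)) * ennreal (G (P y l)) \<partial>lborel)"
          using True G0 by (intro nn_integral_cong) (simp add: ennreal_mult mult.commute)
        also have "\<dots> = ennreal (l powr (a*p)) * (ennreal (l powr (- n)) * ennreal I)"
          using scale_int[OF Gm, of l x] True I0
          by (simp add: nn_integral_cmult P_def n_def)
        also have "\<dots> = ennreal (indicator {0<..<1} l * l powr (a*p - n)) * ennreal I"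
          using True by (simp add: ennreal_mult powr_diff powr_minus divide_inverse mult.assoc)
        finally show ?thesis .
      qed simp
    qed
    also have "\<dots> = (\<integral>\<^sup>+l. ennreal (indicator {0<..<1} l * l powr (a*p - n)) \<partial>lborel) * ennreal I"
      by (simp add: nn_integral_multc)
    also have "\<dots> = ennreal I * ennreal (1 / (a*p - n + 1))"
      using powr_int_01[of "a*p - n"] ap by (simp add: n_def mult.commute)
    finally show ?thesis .
  qed
  have apn: "a*p - n + 1 > 0" using ap by (simp add: n_def)
  have yp: "F z \<le> e powr p / p * (G z * l powr (a*p)) + e powr (-q) / q * (W z * l powr (-c))"
    if e: "e > 0" and l: "l > 0" for e l z
  proof (cases "F z = 0")
    case True
    have "0 \<le> e powr p / p * (G z * l powr (a*p))" using G0[of z] p0 by simp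
    moreover have "0 \<le> e powr (-q) / q * (W z * l powr (-c))" using W0[of z] pq by simp
    ultimately show ?thesis using True by simp
  next
    case False
    then have "grad u z \<noteq> 0" by (simp add: F_def)
    then have "z \<in> tsupport u" using grad_zero by blast
    then have zk: "z $ k > 0" using Cc_facts(5)[OF u] by (auto simp: half_space_def)
    then have "z \<in> H" by (simp add: H_def half_space_def)
    then have Gz: "G z = F z powr p * (z $ k) powr g" and Wz: "W z = (z $ k) powr (-(g*q/p))"
      using zk b by (simp_all add: G_def F_def W_def)
    show ?thesis unfolding Gz Wz c(3)
      using young_pw[OF pq e _ zk l, of "F z" g a] by (simp add: F_def mult.assoc)
  qed
  have PW: "ennreal \<bar>u x\<bar> \<le> ennreal (2*t*(e powr p/p)) * T1 y + ennreal (2*t*(e powr (-q)/q)) * T2 y"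
    if e: "e > 0" and y: "y \<in> E" for e y
  proof -
    have uy: "u y = 0" using u_zero[OF u] Ey[OF y] by auto
    have "ennreal \<bar>u x\<bar> \<le> (\<integral>\<^sup>+l. ennreal (indicator {0<..<1} l * (norm (grad u (x + l *\<^sub>R (y - x))) * norm (y - x))) \<partial>lborel)"
      using ftc_bound[OF u, of y x] uy by simp
    also have "\<dots> \<le> (\<integral>\<^sup>+l. ennreal (2*t) * ennreal (indicator {0<..<1} l * F (P y l)) \<partial>lborel)"
    proof (intro nn_integral_mono)
      fix l :: real
      have "indicator {0<..<1} l * (norm (grad u (x + l *\<^sub>R (y - x))) * norm (y - x))
          \<le> 2*t * (indicator {0<..<1} l * F (P y l))"
        using Ey[OF y] by (auto simp: F_def P_def indicator_def mult.commute intro!: mult_right_mono)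
      then show "ennreal (indicator {0<..<1} l * (norm (grad u (x + l *\<^sub>R (y - x))) * norm (y - x)))
          \<le> ennreal (2*t) * ennreal (indicator {0<..<1} l * F (P y l))"
        using t0 by (intro enn_aux1) auto
    qed
    also have "\<dots> = ennreal (2*t) * (\<integral>\<^sup>+l. ennreal (indicator {0<..<1} l * F (P y l)) \<partial>lborel)"
      unfolding P_def by (rule nn_integral_cmult) measurable
    also have "(\<integral>\<^sup>+l. ennreal (indicator {0<..<1} l * F (P y l)) \<partial>lborel)
       \<le> (\<integral>\<^sup>+l. ennreal (e powr p/p) * ennreal (indicator {0<..<1} l * (G (P y l) * l powr (a*p)))
              + ennreal (e powr (-q)/q) * ennreal (indicator {0<..<1} l * (W (P y l) * l powr (-c))) \<partial>lborel)"
    proof (intro nn_integral_mono)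
      fix l :: real
      show "ennreal (indicator {0<..<1} l * F (P y l))
         \<le> ennreal (e powr p/p) * ennreal (indicator {0<..<1} l * (G (P y l) * l powr (a*p)))
              + ennreal (e powr (-q)/q) * ennreal (indicator {0<..<1} l * (W (P y l) * l powr (-c)))"
      proof (cases "l \<in> {0<..<1}")
        case True
        have "F (P y l) \<le> e powr p / p * (G (P y l) * l powr (a*p)) + e powr (-q) / q * (W (P y l) * l powr (-c))"
          using yp[OF e, of l "P y l"] True by simp
        moreover have "0 \<le> e powr p / p * (G (P y l) * l powr (a*p))" "0 \<le> e powr (-q) / q * (W (P y l) * l powr (-c))"
          using G0 W0 p0 pq by auto
        ultimately show ?thesis using True p0 pq G0 W0
          by (intro enn_aux2) (auto simp: mult_ac)
      qed simp
    qed
    also have "\<dots> = ennreal (e powr p/p) * T1 y + ennreal (e powr (-q)/q) * T2 y"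
    proof -
      have "(\<integral>\<^sup>+l. ennreal (e powr p/p) * ennreal (indicator {0<..<1} l * (G (P y l) * l powr (a*p)))
              + ennreal (e powr (-q)/q) * ennreal (indicator {0<..<1} l * (W (P y l) * l powr (-c))) \<partial>lborel)
         = (\<integral>\<^sup>+l. ennreal (e powr p/p) * ennreal (indicator {0<..<1} l * (G (P y l) * l powr (a*p))) \<partial>lborel)
           + (\<integral>\<^sup>+l. ennreal (e powr (-q)/q) * ennreal (indicator {0<..<1} l * (W (P y l) * l powr (-c))) \<partial>lborel)"
        unfolding P_def by (rule nn_integral_add) measurable
      also have "\<dots> = ennreal (e powr p/p) * T1 y + ennreal (e powr (-q)/q) * T2 y"
      proof -
        have "(\<integral>\<^sup>+l. ennreal (e powr p/p) * ennreal (indicator {0<..<1} l * (G (P y l) * l powr (a*p))) \<partial>lborel)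
            = ennreal (e powr p/p) * T1 y"
          unfolding T1_def P_def by (rule nn_integral_cmult) measurable
        moreover have "(\<integral>\<^sup>+l. ennreal (e powr (-q)/q) * ennreal (indicator {0<..<1} l * (W (P y l) * l powr (-c))) \<partial>lborel)
            = ennreal (e powr (-q)/q) * T2 y"
          unfolding T2_def P_def by (rule nn_integral_cmult) measurable
        ultimately show ?thesis by simp
      qed
      finally show ?thesis .
    qed
    finally have "ennreal \<bar>u x\<bar> \<le> ennreal (2*t) * (ennreal (e powr p/p) * T1 y + ennreal (e powr (-q)/q) * T2 y)"
      by (simp add: mult_left_mono)
    also have "\<dots> = ennreal (2*t*(e powr p/p)) * T1 y + ennreal (2*t*(e powr (-q)/q)) * T2 y"
    proof -
      have m1: "ennreal (2*t*(e powr p/p)) = ennreal (2*t) * ennreal (e powr p/p)"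
        using t0 by (intro ennreal_mult') auto
      have m2: "ennreal (2*t*(e powr (-q)/q)) = ennreal (2*t) * ennreal (e powr (-q)/q)"
        using t0 by (intro ennreal_mult') auto
      show ?thesis unfolding m1 m2 distrib_left by (simp only: mult.assoc)
    qed
    finally show ?thesis .
  qed
  have Em: "E \<in> sets lborel" by (simp add: E_def)
  have T1m[measurable]: "T1 \<in> borel_measurable borel" unfolding T1_def P_def by measurable
  have T2m[measurable]: "T2 \<in> borel_measurable borel" unfolding T2_def P_def by measurable
  have key: "V * \<bar>u x\<bar> \<le> 2*t*(e powr p/p) * (I * (1 / (a*p - n + 1))) + 2*t*(e powr (-q)/q) * (t powr (-b) * Bc * V)"
    if e: "e > 0" for e
  proof -
    define \<alpha>1 where "\<alpha>1 = 2*t*(e powr p/p)"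
    define \<alpha>2 where "\<alpha>2 = 2*t*(e powr (-q)/q)"
    have a1: "\<alpha>1 \<ge> 0" "\<alpha>2 \<ge> 0" using t0 p0 pq by (auto simp: \<alpha>1_def \<alpha>2_def)
    have "ennreal (V * \<bar>u x\<bar>) = ennreal \<bar>u x\<bar> * emeasure lborel E"
      using V0 by (simp add: EV ennreal_mult' mult.commute)
    also have "\<dots> = (\<integral>\<^sup>+y. ennreal \<bar>u x\<bar> * indicator E y \<partial>lborel)"
      using Em by (simp add: nn_integral_cmult_indicator)
    also have "\<dots> \<le> (\<integral>\<^sup>+y. ennreal \<alpha>1 * (T1 y * indicator E y) + ennreal \<alpha>2 * (T2 y * indicator E y) \<partial>lborel)"
    proof (intro nn_integral_mono)
      fix y
      show "ennreal \<bar>u x\<bar> * indicator E y \<le> ennreal \<alpha>1 * (T1 y * indicator E y) + ennreal \<alpha>2 * (T2 y * indicator E y)"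
        using PW[OF e, of y] by (cases "y \<in> E") (auto simp: \<alpha>1_def \<alpha>2_def)
    qed
    also have "\<dots> = ennreal \<alpha>1 * (\<integral>\<^sup>+y. T1 y * indicator E y \<partial>lborel) + ennreal \<alpha>2 * (\<integral>\<^sup>+y. T2 y * indicator E y \<partial>lborel)"
      using Em by (simp add: nn_integral_add nn_integral_cmult)
    also have "\<dots> \<le> ennreal \<alpha>1 * (ennreal I * ennreal (1 / (a*p - n + 1))) + ennreal \<alpha>2 * (ennreal (t powr (-b) * Bc) * ennreal V)"
    proof (intro add_mono mult_left_mono)
      have "(\<integral>\<^sup>+y. T1 y * indicator E y \<partial>lborel) \<le> (\<integral>\<^sup>+y. T1 y \<partial>lborel)"
        by (intro nn_integral_mono) (auto simp: indicator_def)
      then show "(\<integral>\<^sup>+y. T1 y * indicator E y \<partial>lborel) \<le> ennreal I * ennreal (1 / (a*p - n + 1))"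
        using T1b by simp
      have "(\<integral>\<^sup>+y. T2 y * indicator E y \<partial>lborel) \<le> (\<integral>\<^sup>+y. ennreal (t powr (-b) * Bc) * indicator E y \<partial>lborel)"
        by (intro nn_integral_mono) (auto simp: indicator_def T2b)
      also have "\<dots> = ennreal (t powr (-b) * Bc) * ennreal V"
        using Em by (simp add: nn_integral_cmult_indicator EV)
      finally show "(\<integral>\<^sup>+y. T2 y * indicator E y \<partial>lborel) \<le> ennreal (t powr (-b) * Bc) * ennreal V" .
    qed auto
    also have "\<dots> = ennreal (\<alpha>1 * (I * (1 / (a*p - n + 1))) + \<alpha>2 * (t powr (-b) * Bc * V))"
    proof -
      have r0: "0 \<le> 1/(a*p-n+1)" using apn by simp
      have r1: "0 \<le> t powr (-b) * Bc" using Bc0 by simp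
      have r2: "0 \<le> V" using V0 by simp
      have e1: "ennreal (\<alpha>1 * (I * (1/(a*p-n+1)))) = ennreal \<alpha>1 * (ennreal I * ennreal (1/(a*p-n+1)))"
        by (simp only: ennreal_mult[OF a1(1) mult_nonneg_nonneg[OF Inn r0]] ennreal_mult[OF Inn r0])
      have e2: "ennreal (\<alpha>2 * (t powr (-b) * Bc * V)) = ennreal \<alpha>2 * (ennreal (t powr (-b) * Bc) * ennreal V)"
        by (simp only: ennreal_mult[OF a1(2) mult_nonneg_nonneg[OF r1 r2]] ennreal_mult[OF r1 r2])
      have e3: "ennreal (\<alpha>1 * (I * (1 / (a*p - n + 1))) + \<alpha>2 * (t powr (-b) * Bc * V))
          = ennreal (\<alpha>1 * (I * (1 / (a*p - n + 1)))) + ennreal (\<alpha>2 * (t powr (-b) * Bc * V))"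
        by (intro ennreal_plus mult_nonneg_nonneg a1 Inn r0 r1 r2)
      show ?thesis unfolding e3 e1 e2 ..
    qed
    finally have fin: "ennreal (V * \<bar>u x\<bar>) \<le> ennreal (\<alpha>1 * (I * (1 / (a*p - n + 1))) + \<alpha>2 * (t powr (-b) * Bc * V))" .
    have R0: "0 \<le> \<alpha>1 * (I * (1 / (a*p - n + 1))) + \<alpha>2 * (t powr (-b) * Bc * V)"
      using a1 Inn apn Bc0 V0 by (intro add_nonneg_nonneg mult_nonneg_nonneg) auto
    have "V * \<bar>u x\<bar> \<le> \<alpha>1 * (I * (1 / (a*p - n + 1))) + \<alpha>2 * (t powr (-b) * Bc * V)"
      using fin ennreal_le_iff[OF R0] by blast
    then show ?thesis unfolding \<alpha>1_def \<alpha>2_def .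
  qed
  define A where "A = 2 * t * I / (V * (a * p - real CARD('n) + 1))"
  define B where "B = 2 * t * t powr (-b) * Bconst b c"
  have A0: "A \<ge> 0" using t0 Inn V0 apn by (simp add: A_def n_def)
  have B0: "B > 0" using t0 Bc0 by (simp add: B_def Bc_def)
  have "\<bar>u x\<bar> \<le> A powr (1/p) * B powr (1/q)"
  proof (rule young_opt[OF pq A0 B0])
    fix e :: real assume e: "e > 0"
    have dn: "a*p - real CARD('n) + 1 \<noteq> 0" using apn by (simp add: n_def)
    have eq: "V * (e powr p * A / p + e powr (-q) * B / q) = 2*t*(e powr p/p) * (I * (1 / (a*p - n + 1))) + 2*t*(e powr (-q)/q) * (t powr (-b) * Bc * V)"
    proof -
      have VA: "V * A = 2*t*I / (a*p - n + 1)" unfolding A_def n_def using V0 by simp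
      have "V * (e powr p * A / p + e powr (-q) * B / q) = e powr p * (V * A) / p + e powr (-q) * B * V / q"
        by (simp add: algebra_simps add_divide_distrib)
      also have "\<dots> = 2*t*(e powr p/p) * (I * (1 / (a*p - n + 1))) + 2*t*(e powr (-q)/q) * (t powr (-b) * Bc * V)"
        unfolding VA B_def Bc_def by (simp add: algebra_simps)
      finally show ?thesis .
    qed
    have "V * \<bar>u x\<bar> \<le> V * (e powr p * A / p + e powr (-q) * B / q)"
      using key[OF e] unfolding eq .
    then show "\<bar>u x\<bar> \<le> e powr p * A / p + e powr (-q) * B / q" using V0 by simp
  qed
  then show ?thesis by (simp add: A_def B_def)
qed


lemma final_alg:
  fixes t I K1 K2 p q \<alpha> \<beta> :: real
  assumes "t > 0" "I \<ge> 0" "K1 > 0" "K2 > 0"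
  shows "(K1 * t powr \<alpha> * I) powr (1/p) * (K2 * t powr \<beta>) powr (1/q)
       = K1 powr (1/p) * K2 powr (1/q) * t powr (\<alpha>/p + \<beta>/q) * I powr (1/p)"
  using assms by (simp add: powr_mult powr_powr powr_add mult_ac)

theorem lemma2p3:
  fixes p \<gamma> :: real and k :: "'n::finite"
  assumes "real CARD('n) < p" and "\<gamma> < p - 1"
  shows "\<exists>C>0. \<forall>u \<in> Cc_inf (half_space k). \<forall>x \<in> half_space k.
           \<bar>u x\<bar> \<le> C * (x $ k) powr (1 - (real CARD('n) + \<gamma>) / p) *
             (LINT z:half_space k|lborel. norm (grad u z) powr p * (z $ k) powr \<gamma>) powr (1 / p)"
proof -
  define n where "n = real CARD('n)"
  have n1: "n \<ge> 1" unfolding n_def by (simp add: Suc_le_eq)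
  have np: "n < p" using assms(1) by (simp add: n_def)
  have p1: "p > 1" using n1 np by linarith
  define q where "q = p / (p - 1)"
  have q1: "q > 1" using p1 by (simp add: q_def field_simps)
  have pq: "1/p + 1/q = 1" using p1 by (simp add: q_def field_simps)
  define a where "a = (n + p - 2) / (2 * p)"
  define c where "c = a * q"
  define b where "b = \<gamma> * q / p"
  have c_eq: "c = (n + p - 2) / (2 * (p - 1))" using p1 by (simp add: c_def a_def q_def field_simps)
  have c0: "0 < c" "c < 1" using n1 np p1 unfolding c_eq by (auto simp: field_simps)
  have b_eq: "b = \<gamma> / (p - 1)" using p1 by (simp add: b_def q_def field_simps)
  have b1: "b < 1" using assms(2) p1 unfolding b_eq by (simp add: field_simps)
  have ap: "a * p - n > -1" using p1 np by (simp add: a_def field_simps)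
  define d where "d = a * p - n + 1"
  have d0: "d > 0" using ap by (simp add: d_def)
  define \<omega> where "\<omega> = unit_ball_vol n"
  have \<omega>0: "\<omega> > 0" using n1 by (simp add: \<omega>_def)
  define K1 where "K1 = 2 * 2 ^ CARD('n) / (\<omega> * d)"
  define K2 where "K2 = 2 * Bconst b c"
  have K10: "K1 > 0" using \<omega>0 d0 by (simp add: K1_def)
  have K20: "K2 > 0" using c0 b1 unfolding K2_def Bconst_def by (intro mult_pos_pos add_pos_pos) auto
  define C where "C = K1 powr (1/p) * K2 powr (1/q)"
  have C0: "C > 0" using K10 K20 by (simp add: C_def)
  show ?thesis
  proof (intro exI[of _ C] conjI ballI)
    show "C > 0" by (rule C0)
    fix u x assume u: "u \<in> Cc_inf (half_space k)" and x: "x \<in> half_space k"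
    define t where "t = x $ k"
    define I where "I = (LINT z:half_space k|lborel. norm (grad u z) powr p * (z $ k) powr \<gamma>)"
    have t0: "t > 0" using x by (simp add: t_def half_space_def)
    have I0: "I \<ge> 0" unfolding I_def set_lebesgue_integral_def by (intro integral_nonneg_AE) auto
    have mb: "\<bar>u x\<bar> \<le> (2 * t * I / (unit_ball_vol (real CARD('n)) * (t/2) ^ CARD('n) * (a * p - real CARD('n) + 1))) powr (1/p)
                 * (2 * t * t powr (-b) * Bconst b c) powr (1/q)"
      using main_bound[OF p1 q1 pq c0 c_def b1 b_def ap[unfolded n_def] u x] unfolding t_def I_def .
    have A: "2 * t * I / (unit_ball_vol (real CARD('n)) * (t/2) ^ CARD('n) * (a * p - real CARD('n) + 1))
        = K1 * t powr (1 - n) * I"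
    proof -
      obtain N where N: "N = t ^ CARD('n)" "N > 0" using t0 by simp
      have h1: "t powr (1 - real CARD('n)) = t / N" using t0 N
        by (simp add: powr_diff powr_realpow)
      have h2: "(t/2) ^ CARD('n) = N / 2 ^ CARD('n)" using N by (simp add: power_divide)
      have w: "unit_ball_vol (real CARD('n)) > 0" by simp
      have dd: "a * p - real CARD('n) + 1 > 0" using d0 by (simp add: d_def n_def)
      show ?thesis unfolding h1 h2 K1_def \<omega>_def d_def n_def using N(2) w dd
        by (simp add: field_simps)
    qed
    have B: "2 * t * t powr (-b) * Bconst b c = K2 * t powr (1 - b)"
      using t0 by (simp add: K2_def powr_diff powr_minus field_simps)
    have ex: "(1 - n)/p + (1 - b)/q = 1 - (real CARD('n) + \<gamma>) / p"
      using p1 by (simp add: n_def b_def q_def field_simps)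
    have "\<bar>u x\<bar> \<le> K1 powr (1/p) * K2 powr (1/q) * t powr ((1 - n)/p + (1 - b)/q) * I powr (1/p)"
      using mb unfolding A B final_alg[OF t0 I0 K10 K20] .
    then show "\<bar>u x\<bar> \<le> C * (x $ k) powr (1 - (real CARD('n) + \<gamma>) / p) *
             (LINT z:half_space k|lborel. norm (grad u z) powr p * (z $ k) powr \<gamma>) powr (1 / p)"
      unfolding ex C_def t_def I_def .
  qed
qed


end
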